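(* Every shifted hyperbolic operator $T\in L_{aut}(\mathcal B)$ has the shadowing property but does not have the unique shadowing property.
   Context: $\mathcal B$ is a Banach space. $T$ is generalized hyperbolic if there is a decomposition $\mathcal B=E^-\oplus E^+$ into complementary closed subspaces with $T(E^+)\subset E^+$, $T^{-1}(E^-)\subset E^-$, and $T|_{E^+}$, $T^{-1}|_{E^-}$ uniform contractions; $T$ is shifted hyperbolic if in addition $E^-\cap T^{-1}(E^+)\ne\{0\}$. A $\delta$-pseudo-orbit is a sequence $(x_n)_{n\in\mathbb Z}$ with $|x_{n+1}-Tx_n|<\delta$; $y$ $\varepsilon$-shadows it if $|x_n-T^ny|<\varepsilon$ for all $n$. Shadowing property: for every $\varepsilon>0$ there is $\delta>0$ such that every $\delta$-pseudo-orbit is $\varepsilon$-shadowed. Unique shadowing property: there exist $\varepsilon_0,\delta_0>0$ such that for every $0<\varepsilon\le\varepsilon_0$ there is $0<\delta\le\delta_0$ such that every $\delta$-pseudo-orbit is $\varepsilon$-shadowed by exactly one point. *)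

theory Defs
  imports "HOL-Analysis.Analysis"
begin

definition L_aut :: "('a::banach \<Rightarrow> 'a) \<Rightarrow> bool" where
  "L_aut T \<longleftrightarrow> bounded_linear T \<and> bij T \<and> bounded_linear (inv T)"

definition Tpow :: "('a \<Rightarrow> 'a) \<Rightarrow> int \<Rightarrow> 'a \<Rightarrow> 'a" where
  "Tpow T n = (if 0 \<le> n then T ^^ nat n else inv T ^^ nat (- n))"

definition uniform_contraction_on :: "'a set \<Rightarrow> ('a::real_normed_vector \<Rightarrow> 'a) \<Rightarrow> bool" where
  "uniform_contraction_on E S \<longleftrightarrow> (\<exists>t<1. \<forall>x\<in>E. norm (S x) \<le> t * norm x)"

definition complementary_closed_subspaces :: "'a::real_normed_vector set \<Rightarrow> 'a set \<Rightarrow> bool" where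
  "complementary_closed_subspaces Em Ep \<longleftrightarrow>
     subspace Em \<and> subspace Ep \<and> closed Em \<and> closed Ep \<and>
     Em \<inter> Ep = {0} \<and> (\<forall>x. \<exists>u\<in>Em. \<exists>v\<in>Ep. x = u + v)"

definition generalized_hyperbolic_split :: "('a::banach \<Rightarrow> 'a) \<Rightarrow> 'a set \<Rightarrow> 'a set \<Rightarrow> bool" where
  "generalized_hyperbolic_split T Em Ep \<longleftrightarrow>
     complementary_closed_subspaces Em Ep \<and> T ` Ep \<subseteq> Ep \<and> inv T ` Em \<subseteq> Em \<and>
     uniform_contraction_on Ep T \<and> uniform_contraction_on Em (inv T)"

definition generalized_hyperbolic :: "('a::banach \<Rightarrow> 'a) \<Rightarrow> bool" where
  "generalized_hyperbolic T \<longleftrightarrow> (\<exists>Em Ep. generalized_hyperbolic_split T Em Ep)"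

definition shifted_hyperbolic :: "('a::banach \<Rightarrow> 'a) \<Rightarrow> bool" where
  "shifted_hyperbolic T \<longleftrightarrow> (\<exists>Em Ep. generalized_hyperbolic_split T Em Ep \<and>
       Em \<inter> (inv T) ` Ep \<noteq> {0})"

definition pseudo_orbit :: "('a::real_normed_vector \<Rightarrow> 'a) \<Rightarrow> real \<Rightarrow> (int \<Rightarrow> 'a) \<Rightarrow> bool" where
  "pseudo_orbit T \<delta> x \<longleftrightarrow> (\<forall>n. norm (x (n + 1) - T (x n)) < \<delta>)"

definition shadows :: "('a::real_normed_vector \<Rightarrow> 'a) \<Rightarrow> real \<Rightarrow> 'a \<Rightarrow> (int \<Rightarrow> 'a) \<Rightarrow> bool" where
  "shadows T \<epsilon> y x \<longleftrightarrow> (\<forall>n. norm (x n - Tpow T n y) < \<epsilon>)"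

definition shadowing_property :: "('a::real_normed_vector \<Rightarrow> 'a) \<Rightarrow> bool" where
  "shadowing_property T \<longleftrightarrow> (\<forall>\<epsilon>>0. \<exists>\<delta>>0. \<forall>x. pseudo_orbit T \<delta> x \<longrightarrow> (\<exists>y. shadows T \<epsilon> y x))"

definition unique_shadowing_property :: "('a::real_normed_vector \<Rightarrow> 'a) \<Rightarrow> bool" where
  "unique_shadowing_property T \<longleftrightarrow> (\<exists>\<epsilon>0>0. \<exists>\<delta>0>0. \<forall>\<epsilon>. 0 < \<epsilon> \<and> \<epsilon> \<le> \<epsilon>0 \<longrightarrow>
     (\<exists>\<delta>. 0 < \<delta> \<and> \<delta> \<le> \<delta>0 \<and> (\<forall>x. pseudo_orbit T \<delta> x \<longrightarrow> (\<exists>!y. shadows T \<epsilon> y x))))"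

end

theory Submission
  imports Defs
begin

lemma approx_small:
  fixes Em Ep :: "'a::banach set"
  assumes cc: "complementary_closed_subspaces Em Ep"
  shows "\<exists>n r. r > 0 \<and> (\<forall>y \<eta>. norm y < r \<and> \<eta> > 0 \<longrightarrow>
     (\<exists>u\<in>Em. \<exists>v\<in>Ep. norm u \<le> real n \<and> norm v \<le> real n \<and> norm (y - (u + v)) < \<eta>))"
proof -
  have sEm: "subspace Em" and sEp: "subspace Ep" and dec: "\<And>x. \<exists>u\<in>Em. \<exists>v\<in>Ep. x = u + v"
    using cc unfolding complementary_closed_subspaces_def by auto
  define D where "D n = {u + v | u v. u \<in> Em \<and> v \<in> Ep \<and> norm u \<le> real n \<and> norm v \<le> real n}" for n :: nat
  define K where "K n = closure (D n)" for n
  have "(\<Union>(range K)) = UNIV"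
  proof (rule set_eqI, rule iffI)
    fix x :: 'a
    assume "x \<in> UNIV"
    obtain u v where uv: "u \<in> Em" "v \<in> Ep" "x = u + v" using dec by blast
    obtain n :: nat where "max (norm u) (norm v) \<le> real n" using real_arch_simple by blast
    then have "x \<in> D n" unfolding D_def using uv by auto
    then show "x \<in> \<Union>(range K)" unfolding K_def using closure_subset by blast
  qed simp
  then have "euclidean interior_of \<Union>(range K) \<noteq> {}" by simp
  moreover have "\<exists>n. interior (K n) \<noteq> {}"
  proof (rule ccontr)
    assume "\<not> (\<exists>n. interior (K n) \<noteq> {})"
    then have all: "\<And>n. interior (K n) = {}" by blast
    have "euclidean interior_of \<Union>(range K) = {}"
    proof (rule Baire_category_alt)
      show "completely_metrizable_space (euclidean :: 'a topology) \<or> locally_compact_space (euclidean :: 'a topology) \<and> regular_space (euclidean :: 'a topology)"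
        using completely_metrizable_space_euclidean[where 'a='a] by simp
      show "countable (range K)" by simp
      fix T assume "T \<in> range K"
      then obtain n where "T = K n" by blast
      then show "closedin euclidean T \<and> euclidean interior_of T = {}"
        using all[of n] unfolding K_def by simp
    qed
    with \<open>euclidean interior_of \<Union>(range K) \<noteq> {}\<close> show False by blast
  qed
  then obtain n where "interior (K n) \<noteq> {}" by blast
  then obtain a where "a \<in> interior (K n)" by blast
  then obtain r where r0: "r > 0" "ball a r \<subseteq> interior (K n)"
    using open_contains_ball_eq[OF open_interior] by blast
  then have r: "r > 0" "ball a r \<subseteq> K n" using interior_subset by blast+
  show ?thesis
  proof (intro exI[of _ n] exI[of _ r] conjI allI impI r(1))
    fix y :: 'a and \<eta> :: real
    assume h: "norm y < r \<and> \<eta> > 0"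
    have "a + y \<in> closure (D n)" "a - y \<in> closure (D n)"
      using r h unfolding K_def by (auto simp: dist_norm)
    then obtain p q where p: "p \<in> D n" "dist p (a + y) < \<eta>" and q: "q \<in> D n" "dist q (a - y) < \<eta>"
      using h closure_approachable[of _ "D n"] by blast
    obtain u1 v1 where 1: "p = u1 + v1" "u1 \<in> Em" "v1 \<in> Ep" "norm u1 \<le> real n" "norm v1 \<le> real n"
      using p unfolding D_def by auto
    obtain u2 v2 where 2: "q = u2 + v2" "u2 \<in> Em" "v2 \<in> Ep" "norm u2 \<le> real n" "norm v2 \<le> real n"
      using q unfolding D_def by auto
    show "\<exists>u\<in>Em. \<exists>v\<in>Ep. norm u \<le> real n \<and> norm v \<le> real n \<and> norm (y - (u + v)) < \<eta>"
    proof (intro bexI conjI)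
      show "(1/2) *\<^sub>R (u1 - u2) \<in> Em" "(1/2) *\<^sub>R (v1 - v2) \<in> Ep"
        using 1 2 sEm sEp by (auto intro: subspace_mul subspace_diff)
      have "norm (u1 - u2) \<le> norm u1 + norm u2" by (rule norm_triangle_ineq4)
      then show "norm ((1/2) *\<^sub>R (u1 - u2)) \<le> real n" using 1 2 by simp
      have "norm (v1 - v2) \<le> norm v1 + norm v2" by (rule norm_triangle_ineq4)
      then show "norm ((1/2) *\<^sub>R (v1 - v2)) \<le> real n" using 1 2 by simp
      have e: "y - ((1/2) *\<^sub>R (u1 - u2) + (1/2) *\<^sub>R (v1 - v2)) = (1/2) *\<^sub>R ((a + y) - p) - (1/2) *\<^sub>R ((a - y) - q)"
        using 1 2 by (simp add: algebra_simps) (simp flip: scaleR_add_left)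
      have "norm ((1/2) *\<^sub>R ((a + y) - p) - (1/2) *\<^sub>R ((a - y) - q)) \<le> norm ((1/2) *\<^sub>R ((a + y) - p)) + norm ((1/2) *\<^sub>R ((a - y) - q))"
        by (rule norm_triangle_ineq4)
      also have "\<dots> < \<eta>/2 + \<eta>/2"
        using p q by (simp add: dist_norm norm_minus_commute)
      finally show "norm (y - ((1/2) *\<^sub>R (u1 - u2) + (1/2) *\<^sub>R (v1 - v2))) < \<eta>" using e by simp
    qed
  qed
qed

lemma approx_half:
  fixes Em Ep :: "'a::banach set"
  assumes cc: "complementary_closed_subspaces Em Ep"
  shows "\<exists>M\<ge>0. \<forall>y. \<exists>u\<in>Em. \<exists>v\<in>Ep. norm u \<le> M * norm y \<and> norm v \<le> M * norm y \<and> norm (y - (u + v)) \<le> norm y / 2"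
proof -
  have sEm: "subspace Em" and sEp: "subspace Ep"
    using cc unfolding complementary_closed_subspaces_def by auto
  obtain n r where r: "r > 0" and A: "\<And>y \<eta>. norm y < r \<Longrightarrow> \<eta> > 0 \<Longrightarrow>
     (\<exists>u\<in>Em. \<exists>v\<in>Ep. norm u \<le> real n \<and> norm v \<le> real n \<and> norm (y - (u + v)) < \<eta>)"
    using approx_small[OF cc] by blast
  show ?thesis
  proof (intro exI[of _ "2 * real n / r"] conjI allI)
    show "0 \<le> 2 * real n / r" using r by simp
    fix y :: 'a
    show "\<exists>u\<in>Em. \<exists>v\<in>Ep. norm u \<le> 2 * real n / r * norm y \<and> norm v \<le> 2 * real n / r * norm y \<and> norm (y - (u + v)) \<le> norm y / 2"
    proof (cases "y = 0")
      case True
      then show ?thesis using sEm sEp subspace_0 by fastforce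
    next
      case False
      then have ny: "norm y > 0" by simp
      define s where "s = r / (2 * norm y)"
      have s: "s > 0" using r ny by (simp add: s_def)
      have "norm (s *\<^sub>R y) = r / 2" using ny r by (simp add: s_def)
      then have "norm (s *\<^sub>R y) < r" using r by simp
      then obtain u v where uv: "u \<in> Em" "v \<in> Ep" "norm u \<le> real n" "norm v \<le> real n"
        "norm (s *\<^sub>R y - (u + v)) < r / 4"
        using A[of "s *\<^sub>R y" "r/4"] r by auto
      show ?thesis
      proof (intro bexI conjI)
        show "(1/s) *\<^sub>R u \<in> Em" "(1/s) *\<^sub>R v \<in> Ep" using uv sEm sEp by (auto intro: subspace_mul)
        have "norm ((1/s) *\<^sub>R u) = norm u / s" using s by simp
        also have "\<dots> \<le> real n / s" using uv s by (simp add: divide_right_mono)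
        also have "\<dots> = 2 * real n / r * norm y" using ny r by (simp add: s_def)
        finally show "norm ((1/s) *\<^sub>R u) \<le> 2 * real n / r * norm y" .
        have "norm ((1/s) *\<^sub>R v) = norm v / s" using s by simp
        also have "\<dots> \<le> real n / s" using uv s by (simp add: divide_right_mono)
        also have "\<dots> = 2 * real n / r * norm y" using ny r by (simp add: s_def)
        finally show "norm ((1/s) *\<^sub>R v) \<le> 2 * real n / r * norm y" .
        have "y - ((1/s) *\<^sub>R u + (1/s) *\<^sub>R v) = (1/s) *\<^sub>R (s *\<^sub>R y - (u + v))"
          using s by (simp add: algebra_simps)
        then have "norm (y - ((1/s) *\<^sub>R u + (1/s) *\<^sub>R v)) = norm (s *\<^sub>R y - (u + v)) / s"
          using s by simp
        also have "\<dots> \<le> (r/4) / s" using uv(5) s by (intro divide_right_mono) auto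
        also have "\<dots> = norm y / 2" using ny r by (simp add: s_def)
        finally show "norm (y - ((1/s) *\<^sub>R u + (1/s) *\<^sub>R v)) \<le> norm y / 2" .
      qed
    qed
  qed
qed

lemma bounded_decomp:
  fixes Em Ep :: "'a::banach set"
  assumes cc: "complementary_closed_subspaces Em Ep"
  shows "\<exists>C>0. \<forall>x. \<exists>u\<in>Em. \<exists>v\<in>Ep. x = u + v \<and> norm u \<le> C * norm x \<and> norm v \<le> C * norm x"
proof -
  have sEm: "subspace Em" and sEp: "subspace Ep" and cEm: "closed Em" and cEp: "closed Ep"
    using cc unfolding complementary_closed_subspaces_def by auto
  obtain M where M0: "M \<ge> 0" and H: "\<forall>y. \<exists>u\<in>Em. \<exists>v\<in>Ep. norm u \<le> M * norm y \<and> norm v \<le> M * norm y \<and> norm (y - (u + v)) \<le> norm y / 2"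
    using approx_half[OF cc] by blast
  then have "\<forall>y. \<exists>p. fst p \<in> Em \<and> snd p \<in> Ep \<and> norm (fst p) \<le> M * norm y \<and> norm (snd p) \<le> M * norm y \<and> norm (y - (fst p + snd p)) \<le> norm y / 2"
    by (metis fst_conv snd_conv)
  then obtain P where P: "\<And>y. fst (P y) \<in> Em \<and> snd (P y) \<in> Ep \<and> norm (fst (P y)) \<le> M * norm y \<and> norm (snd (P y)) \<le> M * norm y \<and> norm (y - (fst (P y) + snd (P y))) \<le> norm y / 2"
    by metis
  define U where "U y = fst (P y)" for y
  define V where "V y = snd (P y)" for y
  have UV: "U y \<in> Em" "V y \<in> Ep" "norm (U y) \<le> M * norm y" "norm (V y) \<le> M * norm y" "norm (y - (U y + V y)) \<le> norm y / 2" for y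
    using P[of y] unfolding U_def V_def by auto
  show ?thesis
  proof (intro exI[of _ "2 * M + 1"] conjI allI)
    show "0 < 2 * M + 1" using M0 by simp
    fix x :: 'a
    define st where "st y = y - (U y + V y)" for y
    define xs where "xs k = (st ^^ k) x" for k
    have xsS: "xs (Suc k) = xs k - (U (xs k) + V (xs k))" for k unfolding xs_def st_def by simp
    have xsb: "norm (xs k) \<le> norm x * (1/2) ^ k" for k
    proof (induction k)
      case 0 then show ?case by (simp add: xs_def)
    next
      case (Suc k)
      have "norm (xs (Suc k)) \<le> norm (xs k) / 2" using UV(5)[of "xs k"] xsS by simp
      also have "\<dots> \<le> norm x * (1/2) ^ k / 2" using Suc by simp
      finally show ?case by simp
    qed
    have gs: "summable (\<lambda>k. M * norm x * (1/2::real) ^ k)"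
      by (intro summable_mult summable_geometric) simp
    have gsum: "(\<Sum>k. M * norm x * (1/2::real) ^ k) = 2 * M * norm x"
      by (subst suminf_mult) (simp_all add: suminf_geometric)
    have bU: "norm (U (xs k)) \<le> M * norm x * (1/2) ^ k" for k
    proof -
      have "M * norm (xs k) \<le> M * (norm x * (1/2) ^ k)" using xsb[of k] M0 by (rule mult_left_mono)
      then show ?thesis using UV(3)[of "xs k"] by (simp add: mult.assoc)
    qed
    have bV: "norm (V (xs k)) \<le> M * norm x * (1/2) ^ k" for k
    proof -
      have "M * norm (xs k) \<le> M * (norm x * (1/2) ^ k)" using xsb[of k] M0 by (rule mult_left_mono)
      then show ?thesis using UV(4)[of "xs k"] by (simp add: mult.assoc)
    qed
    have sU: "summable (\<lambda>k. U (xs k))"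
      by (rule summable_comparison_test'[OF gs, of 0]) (rule bU)
    have sV: "summable (\<lambda>k. V (xs k))"
      by (rule summable_comparison_test'[OF gs, of 0]) (rule bV)
    define u where "u = (\<Sum>k. U (xs k))"
    define v where "v = (\<Sum>k. V (xs k))"
    have lu: "(\<lambda>n. \<Sum>k<n. U (xs k)) \<longlonglongrightarrow> u" unfolding u_def using sU summable_LIMSEQ by blast
    have lv: "(\<lambda>n. \<Sum>k<n. V (xs k)) \<longlonglongrightarrow> v" unfolding v_def using sV summable_LIMSEQ by blast
    have uE: "u \<in> Em"
    proof (rule closed_sequentially[OF cEm _ lu])
      show "(\<Sum>k<n. U (xs k)) \<in> Em" for n by (rule subspace_sum[OF sEm UV(1)])
    qed
    have vE: "v \<in> Ep"
    proof (rule closed_sequentially[OF cEp _ lv])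
      show "(\<Sum>k<n. V (xs k)) \<in> Ep" for n by (rule subspace_sum[OF sEp UV(2)])
    qed
    have xuv: "x = u + v"
    proof -
      have tel: "(\<Sum>k<n. U (xs k)) + (\<Sum>k<n. V (xs k)) = x - xs n" for n
      proof (induction n)
        case 0 then show ?case by (simp add: xs_def)
      next
        case (Suc n) then show ?case by (simp add: xsS algebra_simps)
      qed
      have "(\<lambda>n. (\<Sum>k<n. U (xs k)) + (\<Sum>k<n. V (xs k))) \<longlonglongrightarrow> u + v"
        using lu lv by (rule tendsto_add)
      moreover have "xs \<longlonglongrightarrow> 0"
      proof (rule tendsto_norm_zero_cancel, rule Lim_null_comparison[where g="\<lambda>k. norm x * (1/2) ^ k"])
        show "\<forall>\<^sub>F k in sequentially. norm (norm (xs k)) \<le> norm x * (1/2) ^ k" using xsb by simp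
        show "(\<lambda>k. norm x * (1/2::real) ^ k) \<longlonglongrightarrow> 0"
          by (intro tendsto_mult_right_zero LIMSEQ_power_zero) simp
      qed
      then have "(\<lambda>n. x - xs n) \<longlonglongrightarrow> x - 0" by (intro tendsto_diff tendsto_const)
      ultimately have "u + v = x - 0" unfolding tel by (rule LIMSEQ_unique)
      then show ?thesis by simp
    qed
    have nu: "norm u \<le> 2 * M * norm x"
      unfolding u_def gsum[symmetric] using bU gs by (rule norm_suminf_le)
    have nv: "norm v \<le> 2 * M * norm x"
      unfolding v_def gsum[symmetric] using bV gs by (rule norm_suminf_le)
    have m: "2 * M * norm x \<le> (2 * M + 1) * norm x" by (intro mult_right_mono) auto
    have "u \<in> Em \<and> v \<in> Ep \<and> x = u + v \<and> norm u \<le> (2 * M + 1) * norm x \<and> norm v \<le> (2 * M + 1) * norm x"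
      using uE vE xuv nu nv m by (intro conjI; linarith?)
    then show "\<exists>u\<in>Em. \<exists>v\<in>Ep. x = u + v \<and> norm u \<le> (2 * M + 1) * norm x \<and> norm v \<le> (2 * M + 1) * norm x"
      by blast
  qed
qed

lemma iter_contr:
  fixes f :: "'a::real_normed_vector \<Rightarrow> 'a"
  assumes "f ` E \<subseteq> E" "\<And>x. x \<in> E \<Longrightarrow> norm (f x) \<le> t * norm x" "0 \<le> t" "x \<in> E"
  shows "(f ^^ k) x \<in> E \<and> norm ((f ^^ k) x) \<le> t ^ k * norm x"
proof (induction k)
  case 0 then show ?case using assms by simp
next
  case (Suc k)
  have "(f ^^ Suc k) x \<in> E" using Suc assms(1) by auto
  moreover have "norm ((f ^^ Suc k) x) \<le> t * norm ((f ^^ k) x)" using Suc assms(2) by simp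
  moreover have "t * norm ((f ^^ k) x) \<le> t * (t ^ k * norm x)" using Suc assms(3) by (intro mult_left_mono) auto
  ultimately show ?case by simp
qed

lemma iter_linear:
  fixes f :: "'a::real_normed_vector \<Rightarrow> 'a"
  assumes "bounded_linear f"
  shows "(f ^^ k) (c *\<^sub>R x) = c *\<^sub>R (f ^^ k) x \<and> (f ^^ k) 0 = 0"
proof -
  interpret f: bounded_linear f by fact
  show ?thesis
  proof (induction k)
    case 0 show ?case by simp
  next
    case (Suc k) then show ?case by (simp add: f.scaleR f.zero)
  qed
qed

lemma Tpow_pos: "Tpow T (int k) = T ^^ k" by (simp add: Tpow_def)
lemma Tpow_neg: "Tpow T (- int k) = inv T ^^ k"
proof (cases k)
  case (Suc m)
  have "nat (int m + 1) = Suc m" by arith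
  then show ?thesis using Suc by (simp add: Tpow_def del: funpow.simps)
qed (simp add: Tpow_def)

lemma Tpow_cases: "(\<And>k. n = int k \<Longrightarrow> P) \<Longrightarrow> (\<And>k. n = - int k \<Longrightarrow> P) \<Longrightarrow> P"
  by (metis int_cases2)

lemma setup_facts:
  fixes T :: "'a::banach \<Rightarrow> 'a"
  assumes "L_aut T" and "generalized_hyperbolic_split T Em Ep"
  obtains t where "0 < t" "t < 1" "bounded_linear T" "bounded_linear (inv T)"
    "\<And>x. inv T (T x) = x" "\<And>x. T (inv T x) = x"
    "T ` Ep \<subseteq> Ep" "inv T ` Em \<subseteq> Em"
    "\<And>x. x \<in> Ep \<Longrightarrow> norm (T x) \<le> t * norm x"
    "\<And>x. x \<in> Em \<Longrightarrow> norm (inv T x) \<le> t * norm x"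
    "complementary_closed_subspaces Em Ep"
proof -
  have bT: "bounded_linear T" and bij: "bij T" and bS: "bounded_linear (inv T)"
    using assms(1) unfolding L_aut_def by auto
  have cc: "complementary_closed_subspaces Em Ep" and TE: "T ` Ep \<subseteq> Ep" "inv T ` Em \<subseteq> Em"
    and c1: "uniform_contraction_on Ep T" and c2: "uniform_contraction_on Em (inv T)"
    using assms(2) unfolding generalized_hyperbolic_split_def by auto
  obtain t1 where t1: "t1 < 1" "\<And>x. x \<in> Ep \<Longrightarrow> norm (T x) \<le> t1 * norm x"
    using c1 unfolding uniform_contraction_on_def by blast
  obtain t2 where t2: "t2 < 1" "\<And>x. x \<in> Em \<Longrightarrow> norm (inv T x) \<le> t2 * norm x"
    using c2 unfolding uniform_contraction_on_def by blast
  define t where "t = max (max t1 t2) (1/2)"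
  have "0 < t" "t < 1" using t1 t2 by (auto simp: t_def)
  moreover have "norm (T x) \<le> t * norm x" if "x \<in> Ep" for x
  proof -
    have "t1 * norm x \<le> t * norm x" by (intro mult_right_mono) (auto simp: t_def)
    then show ?thesis using t1(2)[OF that] by linarith
  qed
  moreover have "norm (inv T x) \<le> t * norm x" if "x \<in> Em" for x
  proof -
    have "t2 * norm x \<le> t * norm x" by (intro mult_right_mono) (auto simp: t_def)
    then show ?thesis using t2(2)[OF that] by linarith
  qed
  moreover have "inv T (T x) = x" for x using bij by (simp add: bij_is_inj)
  moreover have "T (inv T x) = x" for x using bij by (simp add: bij_is_surj surj_f_inv_f)
  ultimately show ?thesis using that bT bS TE cc by blast
qed

lemma not_unique:
  fixes T :: "'a::banach \<Rightarrow> 'a"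
  assumes "L_aut T" and "shifted_hyperbolic T"
  shows "\<not> unique_shadowing_property T"
proof
  assume U: "unique_shadowing_property T"
  obtain Em Ep where sp: "generalized_hyperbolic_split T Em Ep" and ne: "Em \<inter> inv T ` Ep \<noteq> {0}"
    using assms(2) unfolding shifted_hyperbolic_def by blast
  obtain t where t: "0 < t" "t < 1" and bT: "bounded_linear T" and bS: "bounded_linear (inv T)"
    and ST: "\<And>x. inv T (T x) = x" and TS: "\<And>x. T (inv T x) = x"
    and TE: "T ` Ep \<subseteq> Ep" "inv T ` Em \<subseteq> Em"
    and cT: "\<And>x. x \<in> Ep \<Longrightarrow> norm (T x) \<le> t * norm x"
    and cS: "\<And>x. x \<in> Em \<Longrightarrow> norm (inv T x) \<le> t * norm x"
    and cc: "complementary_closed_subspaces Em Ep"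
    using setup_facts[OF assms(1) sp] by metis
  have "0 \<in> Em" "0 \<in> Ep" using cc unfolding complementary_closed_subspaces_def by (auto intro: subspace_0)
  moreover have "0 = inv T 0" using bS by (simp add: linear_simps)
  ultimately have "0 \<in> Em \<inter> inv T ` Ep" by blast
  with ne obtain z where z: "z \<in> Em" "z \<in> inv T ` Ep" "z \<noteq> 0" by blast
  have Tz: "T z \<in> Ep" using z(2) TS by auto
  define B where "B = norm z + norm (T z)"
  have bound: "norm (Tpow T n z) \<le> B" for n
  proof (rule Tpow_cases[of n])
    fix k assume n: "n = int k"
    show ?thesis
    proof (cases k)
      case 0 then show ?thesis using n by (simp add: Tpow_def B_def)
    next
      case (Suc j)
      have "norm ((T ^^ k) z) = norm ((T ^^ j) (T z))" using Suc by (simp add: funpow_Suc_right del: funpow.simps)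
      moreover have "norm ((T ^^ j) (T z)) \<le> t ^ j * norm (T z)"
        using iter_contr[OF TE(1) cT _ Tz, of j] t by simp
      moreover have "t ^ j * norm (T z) \<le> 1 * norm (T z)"
        using t by (intro mult_right_mono power_le_one) auto
      moreover have "0 \<le> norm z" by simp
      ultimately show ?thesis unfolding n Tpow_pos B_def by linarith
    qed
  next
    fix k assume n: "n = - int k"
    have "norm ((inv T ^^ k) z) \<le> t ^ k * norm z"
      using iter_contr[OF TE(2) cS _ z(1), of k] t by simp
    moreover have "t ^ k * norm z \<le> 1 * norm z"
      using t by (intro mult_right_mono power_le_one) auto
    moreover have "0 \<le> norm (T z)" by simp
    ultimately show ?thesis unfolding n Tpow_neg B_def by linarith
  qed
  have lin: "Tpow T n (c *\<^sub>R x) = c *\<^sub>R Tpow T n x \<and> Tpow T n 0 = 0" for n c x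
    by (rule Tpow_cases[of n]) (simp_all add: Tpow_pos Tpow_neg iter_linear[OF bT] iter_linear[OF bS])
  obtain \<epsilon>0 \<delta>0 where e0: "\<epsilon>0 > 0" and H: "\<And>\<epsilon>. 0 < \<epsilon> \<and> \<epsilon> \<le> \<epsilon>0 \<Longrightarrow>
     (\<exists>\<delta>. 0 < \<delta> \<and> \<delta> \<le> \<delta>0 \<and> (\<forall>x. pseudo_orbit T \<delta> x \<longrightarrow> (\<exists>!y. shadows T \<epsilon> y x)))"
    using U unfolding unique_shadowing_property_def by blast
  obtain \<delta> where d: "0 < \<delta>" and HH: "\<And>x. pseudo_orbit T \<delta> x \<Longrightarrow> (\<exists>!y. shadows T \<epsilon>0 y x)"
    using H[of \<epsilon>0] e0 by blast
  have "pseudo_orbit T \<delta> (\<lambda>_. 0)" using d bT by (simp add: pseudo_orbit_def linear_simps)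
  then have uq: "\<exists>!y. shadows T \<epsilon>0 y (\<lambda>_. 0)" by (rule HH)
  have s0: "shadows T \<epsilon>0 0 (\<lambda>_. 0)" using e0 lin by (simp add: shadows_def)
  have Bpos: "B > 0" using z(3) by (simp add: B_def add_pos_nonneg)
  define s where "s = \<epsilon>0 / (2 * B)"
  have s: "s > 0" using e0 Bpos by (simp add: s_def)
  have s1: "shadows T \<epsilon>0 (s *\<^sub>R z) (\<lambda>_. 0)"
    unfolding shadows_def
  proof
    fix n
    have "norm (0 - Tpow T n (s *\<^sub>R z)) = s * norm (Tpow T n z)" using lin s by simp
    also have "\<dots> \<le> s * B" using bound s by (intro mult_left_mono) auto
    also have "\<dots> < \<epsilon>0" using Bpos e0 by (simp add: s_def)
    finally show "norm (0 - Tpow T n (s *\<^sub>R z)) < \<epsilon>0" .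
  qed
  have "s *\<^sub>R z \<noteq> 0" using s z(3) by simp
  then show False using uq s0 s1 by blast
qed

lemma shadowing:
  fixes T :: "'a::banach \<Rightarrow> 'a"
  assumes "L_aut T" and "generalized_hyperbolic_split T Em Ep"
  shows "shadowing_property T"
proof -
  obtain t where t: "0 < t" "t < 1" and bT: "bounded_linear T" and bS: "bounded_linear (inv T)"
    and ST: "\<And>x. inv T (T x) = x" and TS: "\<And>x. T (inv T x) = x"
    and TE: "T ` Ep \<subseteq> Ep" "inv T ` Em \<subseteq> Em"
    and cT: "\<And>x. x \<in> Ep \<Longrightarrow> norm (T x) \<le> t * norm x"
    and cS: "\<And>x. x \<in> Em \<Longrightarrow> norm (inv T x) \<le> t * norm x"
    and cc: "complementary_closed_subspaces Em Ep"
    using setup_facts[OF assms] by metis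
  define S where "S = inv T"
  obtain C where C: "C > 0" and D: "\<forall>x. \<exists>u\<in>Em. \<exists>v\<in>Ep. x = u + v \<and> norm u \<le> C * norm x \<and> norm v \<le> C * norm x"
    using bounded_decomp[OF cc] by blast
  then have "\<forall>x. \<exists>p. fst p \<in> Em \<and> snd p \<in> Ep \<and> x = fst p + snd p \<and> norm (fst p) \<le> C * norm x \<and> norm (snd p) \<le> C * norm x"
    by (metis fst_conv snd_conv)
  then obtain P where P: "\<And>x. fst (P x) \<in> Em \<and> snd (P x) \<in> Ep \<and> x = fst (P x) + snd (P x) \<and> norm (fst (P x)) \<le> C * norm x \<and> norm (snd (P x)) \<le> C * norm x"
    by metis
  define PM where "PM x = fst (P x)" for x
  define PP where "PP x = snd (P x)" for x
  have PMP: "PM x \<in> Em" "PP x \<in> Ep" "x = PM x + PP x" "norm (PM x) \<le> C * norm x" "norm (PP x) \<le> C * norm x" for x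
    using P[of x] unfolding PM_def PP_def by auto
  have linT: "T (a + b) = T a + T b" "T (a - b) = T a - T b" for a b using bT by (simp_all add: linear_simps)
  have linS: "S (a + b) = S a + S b" "S (a - b) = S a - S b" for a b using bS by (simp_all add: linear_simps S_def)
  show ?thesis unfolding shadowing_property_def
  proof (intro allI impI)
    fix \<epsilon> :: real assume e: "\<epsilon> > 0"
    define \<delta> where "\<delta> = \<epsilon> * (1 - t) / (4 * C)"
    have d: "\<delta> > 0" using e t C by (simp add: \<delta>_def)
    show "\<exists>\<delta>>0. \<forall>x. pseudo_orbit T \<delta> x \<longrightarrow> (\<exists>y. shadows T \<epsilon> y x)"
    proof (intro exI[of _ \<delta>] conjI allI impI d)
      fix x assume po: "pseudo_orbit T \<delta> x"
      define e where "e n = x (n + 1) - T (x n)" for n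
      have eb: "norm (e n) < \<delta>" for n using po unfolding pseudo_orbit_def e_def by simp
      have xS: "x (n + 1) = T (x n) + e n" for n unfolding e_def by simp
      define fa where "fa n j = (T ^^ j) (PP (e (n - 1 - int j)))" for n j
      define fb where "fb n j = (S ^^ Suc j) (PM (e (n + int j)))" for n j
      have fab: "norm (fa n j) \<le> C * \<delta> * t ^ j" for n j
      proof -
        have "norm (fa n j) \<le> t ^ j * norm (PP (e (n - 1 - int j)))"
          unfolding fa_def using iter_contr[OF TE(1) cT _ PMP(2), of j] t by simp
        also have "\<dots> \<le> t ^ j * (C * \<delta>)"
        proof (intro mult_left_mono)
          show "norm (PP (e (n - 1 - int j))) \<le> C * \<delta>"
            using PMP(5)[of "e (n - 1 - int j)"] eb[of "n - 1 - int j"] C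
            by (smt (verit) mult_left_mono)
        qed (use t in simp)
        finally show ?thesis by (simp add: mult_ac)
      qed
      have fbb: "norm (fb n j) \<le> C * \<delta> * t ^ j" for n j
      proof -
        have "norm (fb n j) \<le> t ^ Suc j * norm (PM (e (n + int j)))"
          unfolding fb_def S_def using iter_contr[OF TE(2) cS _ PMP(1), of "Suc j"] t by simp
        also have "\<dots> \<le> t ^ j * (C * \<delta>)"
        proof -
          have "norm (PM (e (n + int j))) \<le> C * \<delta>"
            using PMP(4)[of "e (n + int j)"] eb[of "n + int j"] C
            by (smt (verit) mult_left_mono)
          moreover have "t ^ Suc j \<le> t ^ j" using t by (simp add: power_decreasing)
          ultimately show ?thesis using t by (intro mult_mono) auto
        qed
        finally show ?thesis by (simp add: mult_ac)
      qed
      have gs: "summable (\<lambda>j. C * \<delta> * t ^ j)" using t by (intro summable_mult summable_geometric) simp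
      have gsum: "(\<Sum>j. C * \<delta> * t ^ j) = C * \<delta> / (1 - t)"
        using t by (subst suminf_mult) (simp_all add: suminf_geometric)
      have sfa: "summable (fa n)" for n by (rule summable_comparison_test'[OF gs, of 0]) (rule fab)
      have sfb: "summable (fb n)" for n by (rule summable_comparison_test'[OF gs, of 0]) (rule fbb)
      define a where "a n = suminf (fa n)" for n
      define b where "b n = suminf (fb n)" for n
      have na: "norm (a n) \<le> C * \<delta> / (1 - t)" for n
        unfolding a_def gsum[symmetric] using fab gs by (rule norm_suminf_le)
      have nb: "norm (b n) \<le> C * \<delta> / (1 - t)" for n
        unfolding b_def gsum[symmetric] using fbb gs by (rule norm_suminf_le)
      have arec: "a (n + 1) = PP (e n) + T (a n)" for n
      proof -
        have "(\<Sum>j. fa (n + 1) (Suc j)) = a (n + 1) - fa (n + 1) 0"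
          unfolding a_def by (rule suminf_split_head[OF sfa])
        moreover have "fa (n + 1) (Suc j) = T (fa n j)" for j
          by (simp add: fa_def algebra_simps)
        moreover have "(\<Sum>j. T (fa n j)) = T (a n)"
          unfolding a_def by (rule bounded_linear.suminf[OF bT sfa, symmetric])
        moreover have "fa (n + 1) 0 = PP (e n)" by (simp add: fa_def)
        ultimately show ?thesis by simp
      qed
      have brec: "T (b n) = PM (e n) + b (n + 1)" for n
      proof -
        have h0: "(\<Sum>j. fb n (Suc j)) = b n - fb n 0"
          unfolding b_def by (rule suminf_split_head[OF sfb])
        have h1: "fb n (Suc j) = S (fb (n + 1) j)" for j
          by (simp add: fb_def algebra_simps)
        have h2: "(\<Sum>j. S (fb (n + 1) j)) = S (b (n + 1))"
          unfolding b_def S_def by (rule bounded_linear.suminf[OF bS sfb[unfolded S_def], symmetric])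
        have h3: "fb n 0 = S (PM (e n))" by (simp add: fb_def)
        have "b n - fb n 0 = S (b (n + 1))" using h0 h2 by (simp only: h1)
        then have "b n = S (PM (e n)) + S (b (n + 1))" unfolding h3 by (simp add: algebra_simps)
        then have "T (b n) = T (S (PM (e n) + b (n + 1)))" by (simp add: linS)
        then show ?thesis using TS by (simp add: S_def)
      qed
      define w where "w n = a n - b n" for n
      have wrec: "w (n + 1) = T (w n) + e n" for n
      proof -
        have "w (n + 1) = PP (e n) + T (a n) - (T (b n) - PM (e n))"
          unfolding w_def arec brec by simp
        also have "\<dots> = T (a n - b n) + (PM (e n) + PP (e n))" by (simp add: linT algebra_simps)
        finally show ?thesis using PMP(3)[of "e n"] by (simp add: w_def)
      qed
      have wb: "norm (w n) < \<epsilon>" for n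
      proof -
        have "norm (w n) \<le> norm (a n) + norm (b n)" unfolding w_def by (rule norm_triangle_ineq4)
        also have "\<dots> \<le> 2 * (C * \<delta> / (1 - t))" using na[of n] nb[of n] by simp
        also have "\<dots> = \<epsilon> / 2" using t C by (simp add: \<delta>_def field_simps)
        finally show ?thesis using e by simp
      qed
      define y where "y = x 0 - w 0"
      have fwd: "x (int k) - (T ^^ k) y = w (int k)" for k
      proof (induction k)
        case 0 then show ?case by (simp add: y_def)
      next
        case (Suc k)
        have "x (int (Suc k)) - (T ^^ Suc k) y = T (x (int k)) + e (int k) - T ((T ^^ k) y)"
          using xS[of "int k"] by (simp add: add.commute)
        also have "\<dots> = T (x (int k) - (T ^^ k) y) + e (int k)" by (simp add: linT)
        also have "\<dots> = w (int (Suc k))" using Suc wrec[of "int k"] by (simp add: add.commute)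
        finally show ?case .
      qed
      have bwd: "x (- int k) - (S ^^ k) y = w (- int k)" for k
      proof (induction k)
        case 0 then show ?case by (simp add: y_def)
      next
        case (Suc k)
        define m where "m = - int (Suc k)"
        have m1: "m + 1 = - int k" by (simp add: m_def)
        have "(S ^^ k) y = x (m + 1) - w (m + 1)" using Suc m1 by (simp add: algebra_simps)
        also have "\<dots> = T (x m - w m)" using xS[of m] wrec[of m] by (simp add: linT)
        finally have "(S ^^ Suc k) y = x m - w m" using ST by (simp add: S_def)
        then show ?case by (simp add: m_def)
      qed
      show "\<exists>y. shadows T \<epsilon> y x"
      proof (intro exI[of _ y])
        show "shadows T \<epsilon> y x" unfolding shadows_def
        proof
          fix n :: int
          show "norm (x n - Tpow T n y) < \<epsilon>"
          proof (rule Tpow_cases[of n])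
            fix k assume n: "n = int k"
            show ?thesis unfolding n Tpow_pos fwd by (rule wb)
          next
            fix k assume n: "n = - int k"
            show ?thesis unfolding n Tpow_neg S_def[symmetric] bwd by (rule wb)
          qed
        qed
      qed
    qed
  qed
qed

theorem mainTheorem16:
  fixes T :: "'a::banach \<Rightarrow> 'a"
  assumes "L_aut T" and "shifted_hyperbolic T"
  shows "shadowing_property T \<and> \<not> unique_shadowing_property T"
proof
  obtain Em Ep where "generalized_hyperbolic_split T Em Ep"
    using assms(2) unfolding shifted_hyperbolic_def by blast
  then show "shadowing_property T" using shadowing[OF assms(1)] by blast
  show "\<not> unique_shadowing_property T" using not_unique[OF assms] .
qed

end
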